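(* Let $N,n,i,\mathcal V,N_i,\delta,\lambda\in(0,1),\tilde W,p$ be as in the context. Fix $\ell,b\in\{0,1\}^N$ and $r\in\mathbb R^n$. Let $e\in\mathbb R^{Nn}$, $y\in\mathbb R^n$, $w\in\mathbb R^n$ and constants $H\ge0$, $L\ge0$ satisfy $$|w|\le H+L\,|e^i|,$$ where $e^i$ is the $i$-th block of $e$, and set $g:=(-\delta(1)w,-\delta(2)w,\dots,-\delta(N)w)\in\mathbb R^{Nn}$. If the map $(e',y')\mapsto\tilde W(\ell,b,y',e',r)$ is differentiable at $(e,y)$, then $$\Big\langle \frac{\partial \tilde W(\ell,b,y,e,r)}{\partial(e,y)},\,(g,w)\Big\rangle\le \sqrt{N_i}\,H+\tilde L(p(\ell,b))\,\tilde W(\ell,b,y,e,r),$$ where $\tilde L(l):=\lambda^{-l}\sqrt{N_i}\,L$ for $l\in\{0,1\}$.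
   Context: Fix integers $N\ge1$, $n\ge1$, an index $i\in\{1,\dots,N\}$ and a set $\mathcal V\subseteq\{1,\dots,N\}$ with cardinality $N_i:=|\mathcal V|$. For $m\in\{1,\dots,N\}$ let $\delta(m)=1$ if $m\in\mathcal V$ and $\delta(m)=0$ otherwise. $\mathbf 1_N$ is the all-ones vector in $\mathbb R^N$. $\Gamma_m$ is the $N\times N$ matrix whose $(m,m)$ entry is $1$ and all others $0$, and $Y_m:=\Gamma_m\otimes I_n$. Vectors $e\in\mathbb R^{Nn}$ are written in blocks $e=(e^1,\dots,e^N)$, $e^m\in\mathbb R^n$. $|\cdot|$ is the Euclidean norm. For $\ell,b\in\{0,1\}^N$ define $\mathcal R(\ell,b):=\{m\in\mathcal V:\ell^m=1\text{ or }b^m=1\}$, $p(\ell,b):=0$ if $\mathcal R(\ell,b)=\emptyset$ and $p(\ell,b):=1$ otherwise, and for $y,r\in\mathbb R^n$, $e\in\mathbb R^{Nn}$, $$s(\ell,b,y,e,r):=\sum_{l\in\mathcal R(\ell,b)}Y_l\big(\mathbf 1_N\otimes(r-y)-e\big),\qquad \tilde W(\ell,b,y,e,r):=\max\Big\{|e+s(\ell,b,y,e,r)|,\;\lambda\max_{R\subseteq\mathcal R(\ell,b)}\Big|e+\sum_{l\in R}Y_l\,s(\ell,b,y,e,r)\Big|\Big\},$$ the inner maximum being over all subsets $R$ of $\mathcal R(\ell,b)$ including $\emptyset$. *)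

theory Defs
  imports "HOL-Analysis.Analysis"
begin

text \<open>Block vectors in R^(N n) are modelled as elements of real^'n^'N:
  the component e $ m is the m-th block e^m in R^n.  The Euclidean norm of
  real^'n^'N coincides with the Euclidean norm on R^(N n).\<close>

text \<open>Y_m = Gamma_m (x) I_n : keeps block m, zeroes the others.\<close>
definition Ymat :: "'N::finite \<Rightarrow> real^'n^'N \<Rightarrow> real^'n^'N" where
  "Ymat m x = (\<chi> k. if k = m then x $ k else 0)"

text \<open>1_N (x) v : the block vector with every block equal to v.\<close>
definition onesk :: "real^'n \<Rightarrow> real^'n^'N::finite" where
  "onesk v = (\<chi> k. v)"

definition delta :: "'N set \<Rightarrow> 'N \<Rightarrow> real" where
  "delta V m = (if m \<in> V then 1 else 0)"

text \<open>R(l,b) = {m in V. l^m = 1 or b^m = 1}; l,b in {0,1}^N encoded as boolean functions.\<close>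
definition Rset :: "'N set \<Rightarrow> ('N \<Rightarrow> bool) \<Rightarrow> ('N \<Rightarrow> bool) \<Rightarrow> 'N set" where
  "Rset V l b = {m \<in> V. l m \<or> b m}"

definition pfun :: "'N set \<Rightarrow> ('N \<Rightarrow> bool) \<Rightarrow> ('N \<Rightarrow> bool) \<Rightarrow> nat" where
  "pfun V l b = (if Rset V l b = {} then 0 else 1)"

definition sfun :: "'N::finite set \<Rightarrow> ('N \<Rightarrow> bool) \<Rightarrow> ('N \<Rightarrow> bool) \<Rightarrow> real^'n \<Rightarrow> real^'n^'N \<Rightarrow> real^'n \<Rightarrow> real^'n^'N" where
  "sfun V l b y e r = (\<Sum>m\<in>Rset V l b. Ymat m (onesk (r - y) - e))"

definition Wt :: "real \<Rightarrow> 'N::finite set \<Rightarrow> ('N \<Rightarrow> bool) \<Rightarrow> ('N \<Rightarrow> bool) \<Rightarrow> real^'n \<Rightarrow> real^'n^'N \<Rightarrow> real^'n \<Rightarrow> real" where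
  "Wt lam V l b y e r =
     max (norm (e + sfun V l b y e r))
         (lam * Max ((\<lambda>R. norm (e + (\<Sum>m\<in>R. Ymat m (sfun V l b y e r)))) ` Pow (Rset V l b)))"

end

theory Submission
  imports Defs
begin

lemma Ymat_shift:
  fixes w y r :: "real^'n" and e :: "real^'n^'N::finite"
  assumes "m \<in> V"
  shows "Ymat m (onesk (r - (y + t *\<^sub>R w)) - (e + t *\<^sub>R (\<chi> m. - (delta V m *\<^sub>R w))))
       = Ymat m (onesk (r - y) - e)"
  using assms by (simp add: Ymat_def onesk_def delta_def vec_eq_iff algebra_simps)

lemma sfun_shift:
  fixes w y r :: "real^'n" and e :: "real^'n^'N::finite"
  shows "sfun V l b (y + t *\<^sub>R w) (e + t *\<^sub>R (\<chi> m. - (delta V m *\<^sub>R w))) r = sfun V l b y e r"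
  unfolding sfun_def
  by (rule sum.cong) (auto simp: Rset_def Ymat_shift)

lemma Max_shift_le:
  fixes f h :: "'a \<Rightarrow> real"
  assumes "finite A" "A \<noteq> {}" "\<And>x. x \<in> A \<Longrightarrow> f x \<le> h x + c"
  shows "Max (f ` A) \<le> Max (h ` A) + c"
proof -
  have "\<And>x. x \<in> A \<Longrightarrow> h x \<le> Max (h ` A)" using assms by auto
  then have "\<forall>a\<in>f ` A. a \<le> Max (h ` A) + c" using assms(3) by force
  then show ?thesis using assms(1,2) by (subst Max_le_iff) auto
qed

lemma norm_g:
  fixes w :: "real^'n"
  shows "norm ((\<chi> m. - (delta V m *\<^sub>R w)) :: real^'n^'N::finite) = sqrt (real (card V)) * norm w"
proof -
  have e1: "norm ((\<chi> m. - (delta V m *\<^sub>R w)) :: real^'n^'N::finite)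
     = sqrt (\<Sum>m\<in>UNIV. (norm (- (delta V m *\<^sub>R w)))\<^sup>2)"
    by (subst norm_vec_def) (simp only: L2_set_def vec_lambda_beta)
  have "(\<Sum>m\<in>UNIV. (norm (- (delta V m *\<^sub>R w)))\<^sup>2) = (\<Sum>m\<in>V. (norm w)\<^sup>2)"
    by (rule sum.mono_neutral_cong_right) (auto simp: delta_def)
  also have "\<dots> = real (card V) * (norm w)\<^sup>2" by simp
  finally show ?thesis using e1
    by (simp add: real_sqrt_mult)
qed

lemma Wt_shift:
  fixes w y r :: "real^'n" and e :: "real^'n^'N::finite"
  assumes "0 < lam" "lam < 1" "t \<ge> 0"
  shows "Wt lam V l b (y + t *\<^sub>R w) (e + t *\<^sub>R (\<chi> m. - (delta V m *\<^sub>R w))) r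
      \<le> Wt lam V l b y e r + t * (sqrt (real (card V)) * norm w)"
proof -
  define g :: "real^'n^'N" where "g = (\<chi> m. - (delta V m *\<^sub>R w))"
  define s where "s = sfun V l b y e r"
  define c where "c = t * (sqrt (real (card V)) * norm w)"
  have ng: "norm (t *\<^sub>R g) = c" using assms by (simp add: c_def g_def norm_g)
  have c0: "c \<ge> 0" using assms by (simp add: c_def)
  have fin: "finite (Pow (Rset V l b))" by simp
  have ne: "Pow (Rset V l b) \<noteq> {}" by auto
  have A: "norm (e + t *\<^sub>R g + s) \<le> norm (e + s) + c"
    using norm_triangle_ineq[of "e + s" "t *\<^sub>R g"] ng by (simp add: algebra_simps)
  have B: "Max ((\<lambda>R. norm (e + t *\<^sub>R g + (\<Sum>m\<in>R. Ymat m s))) ` Pow (Rset V l b))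
     \<le> Max ((\<lambda>R. norm (e + (\<Sum>m\<in>R. Ymat m s))) ` Pow (Rset V l b)) + c"
  proof (rule Max_shift_le[OF fin ne])
    fix R
    show "norm (e + t *\<^sub>R g + (\<Sum>m\<in>R. Ymat m s)) \<le> norm (e + (\<Sum>m\<in>R. Ymat m s)) + c"
      using norm_triangle_ineq[of "e + (\<Sum>m\<in>R. Ymat m s)" "t *\<^sub>R g"] ng by (simp add: algebra_simps)
  qed
  have B2: "lam * Max ((\<lambda>R. norm (e + t *\<^sub>R g + (\<Sum>m\<in>R. Ymat m s))) ` Pow (Rset V l b))
     \<le> lam * Max ((\<lambda>R. norm (e + (\<Sum>m\<in>R. Ymat m s))) ` Pow (Rset V l b)) + c"
  proof -
    have "lam * Max ((\<lambda>R. norm (e + t *\<^sub>R g + (\<Sum>m\<in>R. Ymat m s))) ` Pow (Rset V l b))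
      \<le> lam * (Max ((\<lambda>R. norm (e + (\<Sum>m\<in>R. Ymat m s))) ` Pow (Rset V l b)) + c)"
      using B assms by (simp add: mult_left_mono)
    also have "\<dots> \<le> lam * Max ((\<lambda>R. norm (e + (\<Sum>m\<in>R. Ymat m s))) ` Pow (Rset V l b)) + c"
      using assms c0 by (simp add: distrib_left mult_left_le_one_le)
    finally show ?thesis .
  qed
  have "Wt lam V l b (y + t *\<^sub>R w) (e + t *\<^sub>R g) r =
     max (norm (e + t *\<^sub>R g + s)) (lam * Max ((\<lambda>R. norm (e + t *\<^sub>R g + (\<Sum>m\<in>R. Ymat m s))) ` Pow (Rset V l b)))"
    unfolding Wt_def g_def s_def sfun_shift ..
  also have "\<dots> \<le> Wt lam V l b y e r + c"
    unfolding Wt_def s_def[symmetric] using A B2 by linarith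
  finally show ?thesis by (simp add: g_def c_def)
qed

lemma Wt_lower:
  fixes y r :: "real^'n" and e :: "real^'n^'N::finite"
  assumes "0 < lam" "lam < 1"
  shows "lam ^ pfun V l b * norm (e $ i) \<le> Wt lam V l b y e r"
proof -
  have fin: "finite (Pow (Rset V l b))" by simp
  have "norm (e + (\<Sum>m\<in>{}. Ymat m (sfun V l b y e r))) \<le> Max ((\<lambda>R. norm (e + (\<Sum>m\<in>R. Ymat m (sfun V l b y e r)))) ` Pow (Rset V l b))"
    by (rule Max_ge) (use fin in \<open>auto intro!: image_eqI[where x="{}"]\<close>)
  then have M: "lam * norm e \<le> lam * Max ((\<lambda>R. norm (e + (\<Sum>m\<in>R. Ymat m (sfun V l b y e r)))) ` Pow (Rset V l b))"
    using assms by (simp add: mult_left_mono)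
  have ni: "norm (e $ i) \<le> norm e" by (rule Finite_Cartesian_Product.norm_nth_le)
  show ?thesis
  proof (cases "Rset V l b = {}")
    case True
    then have "sfun V l b y e r = 0" by (simp add: sfun_def)
    then have "norm e \<le> Wt lam V l b y e r" by (simp add: Wt_def)
    then show ?thesis using True ni by (simp add: pfun_def)
  next
    case False
    have "lam * norm (e $ i) \<le> lam * norm e" using ni assms by (simp add: mult_left_mono)
    then show ?thesis using False M by (simp add: pfun_def Wt_def)
  qed
qed

lemma deriv_le:
  fixes phi :: "real \<Rightarrow> real"
  assumes "DERIV phi 0 :> d" "\<And>t. t \<ge> 0 \<Longrightarrow> phi t \<le> phi 0 + t * c"
  shows "d \<le> c"
proof (rule ccontr)
  assume "\<not> d \<le> c"
  have "DERIV (\<lambda>t. phi t - t * c) 0 :> d - c"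
    using assms(1) by (auto intro!: derivative_eq_intros)
  from DERIV_pos_inc_right[OF this] \<open>\<not> d \<le> c\<close> obtain h where h: "h > 0" and hh: "\<forall>x>0. x < h \<longrightarrow> phi 0 - 0 * c < phi (0 + x) - x * c"
    by auto
  have h2: "h/2 > 0" "h/2 < h" using h by auto
  have "phi 0 - 0 * c < phi (0 + h/2) - (h/2) * c"
    using hh h2 by blast
  then have "phi 0 < phi (h/2) - (h/2) * c" by simp
  with assms(2)[of "h/2"] \<open>h > 0\<close> show False by auto
qed

theorem lemma2:
  fixes lam H L :: real
    and V :: "'N::finite set" and i :: 'N
    and l b :: "'N \<Rightarrow> bool"
    and r y w :: "real^'n"
    and e :: "real^'n^'N"
    and D :: "(real^'n^'N) \<times> (real^'n) \<Rightarrow> real"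
  assumes "0 < lam" "lam < 1"
    and "H \<ge> 0" "L \<ge> 0"
    and "norm w \<le> H + L * norm (e $ i)"
    and "((\<lambda>z. Wt lam V l b (snd z) (fst z) r) has_derivative D) (at (e, y))"
  shows "D ((\<chi> m. - (delta V m *\<^sub>R w)), w)
           \<le> sqrt (real (card V)) * H
             + (sqrt (real (card V)) * L / lam ^ pfun V l b) * Wt lam V l b y e r"
proof -
  define g :: "real^'n^'N" where "g = (\<chi> m. - (delta V m *\<^sub>R w))"
  define F where "F = (\<lambda>z. Wt lam V l b (snd z) (fst z) r)"
  define v where "v = (g, w)"
  define phi where "phi = F \<circ> (\<lambda>t::real. (e, y) + t *\<^sub>R v)"
  have lin: "linear D" using assms(6) has_derivative_linear by blast
  have d1: "((\<lambda>t::real. (e, y) + t *\<^sub>R v) has_derivative (\<lambda>t. t *\<^sub>R v)) (at 0)"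
    by (auto intro!: derivative_eq_intros)
  have d2: "(F has_derivative D) (at ((\<lambda>t::real. (e, y) + t *\<^sub>R v) 0))"
    using assms(6) by (simp add: F_def)
  have "(phi has_derivative (D \<circ> (\<lambda>t. t *\<^sub>R v))) (at 0)"
    unfolding phi_def by (rule diff_chain_at[OF d1 d2])
  moreover have "(D \<circ> (\<lambda>t. t *\<^sub>R v)) = (\<lambda>t. t * D v)"
    using lin by (auto simp: linear_cmul fun_eq_iff)
  moreover have "(\<lambda>t. t * D v) = (*) (D v)" by (auto simp: fun_eq_iff)
  ultimately have der: "DERIV phi 0 :> D v"
    by (simp add: has_field_derivative_def)
  have bnd: "phi t \<le> phi 0 + t * (sqrt (real (card V)) * norm w)" if "t \<ge> 0" for t
    using Wt_shift[OF assms(1,2) that, of V l b y w e r]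
    by (simp add: phi_def F_def v_def g_def)
  have Dv: "D v \<le> sqrt (real (card V)) * norm w" by (rule deriv_le[OF der bnd])
  define W where "W = Wt lam V l b y e r"
  define p where "p = pfun V l b"
  have lp: "lam ^ p > 0" using assms(1) by simp
  have low: "norm (e $ i) \<le> W / lam ^ p"
    using Wt_lower[OF assms(1,2), of V l b e i y r] lp by (simp add: W_def p_def field_simps)
  have sq: "sqrt (real (card V)) \<ge> 0" by simp
  have "D v \<le> sqrt (real (card V)) * (H + L * norm (e $ i))"
    using Dv assms(5) sq by (meson mult_left_mono order_trans)
  also have "\<dots> = sqrt (real (card V)) * H + (sqrt (real (card V)) * L) * norm (e $ i)"
    by (simp add: algebra_simps)
  also have "\<dots> \<le> sqrt (real (card V)) * H + (sqrt (real (card V)) * L) * (W / lam ^ p)"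
    using mult_left_mono[OF low, of "sqrt (real (card V)) * L"] sq assms(4) by simp
  finally show ?thesis by (simp add: v_def g_def W_def p_def)
qed

end
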